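(* Let $a\in\mathbb F^*$ and $g,h\in\mathcal R$ with $x^n-a=hg$, let $k=\deg(h)$ and $c=\gamma(a,g)$. Define $\widehat h^{l}=\rho_l(\theta^{-n}(h))$ and $\widehat g^{r}=\rho_r(\theta^n(g))$. Then (a) $g\,a^{-1}h=c^{-1}(x^n-c)$; (b) $-\theta^{k-n}(c^{-1})\,\theta^k(c^{-1})\,\widehat h^{l}\,a\,\widehat g^{r}=x^n-\theta^k(c^{-1})$; (c) $-\widehat g^{r}\,\theta^{k-n}(c^{-1})\,\widehat h^{l}=x^n-a^{-1}$.
   Context: $\mathbb F$ is a finite field, $\theta\in\mathrm{Aut}(\mathbb F)$, $\mathcal R=\mathbb F[x;\theta]$ the skew polynomial ring (elements $\sum f_ix^i$ with left coefficients, $xb=\theta(b)x$), $n\in\mathbb N$. Integer powers of $\theta$ act on $\mathcal R$ coefficientwise. For a right divisor $g=\sum g_ix^i$ of $x^n-a$, $\gamma(a,g)=a\,g_0^{-1}\theta^n(g_0)$. For nonzero $f=\sum_{i=0}^tf_ix^i$ with $f_t\neq0$, $\rho_l(f)=\sum_{i=0}^t\theta^i(f_{t-i})x^i$ and $\rho_r(f)=\sum_{i=0}^t\theta^{i-t}(f_{t-i})x^i$. *)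

theory Defs
  imports "HOL-Computational_Algebra.Polynomial"
begin

text \<open>Skew polynomial ring F[x;theta] represented on the carrier type 'a poly:
  a polynomial with coefficients f_i stands for sum f_i x^i (left coefficients);
  addition is the usual one, multiplication is the skew product x b = theta(b) x.\<close>

definition field_aut :: "('a::field \<Rightarrow> 'a) \<Rightarrow> bool" where
  "field_aut \<theta> \<longleftrightarrow> bij \<theta> \<and> (\<forall>x y. \<theta> (x + y) = \<theta> x + \<theta> y)
      \<and> (\<forall>x y. \<theta> (x * y) = \<theta> x * \<theta> y) \<and> \<theta> 1 = 1"

definition theta_pow :: "('a \<Rightarrow> 'a) \<Rightarrow> int \<Rightarrow> 'a \<Rightarrow> 'a" where
  "theta_pow \<theta> m = (if 0 \<le> m then \<theta> ^^ nat m else (inv \<theta>) ^^ nat (- m))"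

definition skew_mult :: "('a::comm_ring_1 \<Rightarrow> 'a) \<Rightarrow> 'a poly \<Rightarrow> 'a poly \<Rightarrow> 'a poly" where
  "skew_mult \<theta> f g =
     (\<Sum>i\<le>degree f. \<Sum>j\<le>degree g. monom (coeff f i * (\<theta> ^^ i) (coeff g j)) (i + j))"

definition gamma :: "('a::field \<Rightarrow> 'a) \<Rightarrow> nat \<Rightarrow> 'a \<Rightarrow> 'a poly \<Rightarrow> 'a" where
  "gamma \<theta> n a g = a * inverse (coeff g 0) * (\<theta> ^^ n) (coeff g 0)"

definition rho_l :: "('a::field \<Rightarrow> 'a) \<Rightarrow> 'a poly \<Rightarrow> 'a poly" where
  "rho_l \<theta> f = (\<Sum>i\<le>degree f. monom ((\<theta> ^^ i) (coeff f (degree f - i))) i)"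

definition rho_r :: "('a::field \<Rightarrow> 'a) \<Rightarrow> 'a poly \<Rightarrow> 'a poly" where
  "rho_r \<theta> f = (\<Sum>i\<le>degree f.
      monom (theta_pow \<theta> (int i - int (degree f)) (coeff f (degree f - i))) i)"

end

theory Submission
  imports Defs
begin


context
  fixes \<theta> :: "'a::field \<Rightarrow> 'a"
  assumes aut: "field_aut \<theta>"
begin

lemma th_add: "\<theta> (x + y) = \<theta> x + \<theta> y" and th_mult: "\<theta> (x * y) = \<theta> x * \<theta> y"
  and th_1: "\<theta> 1 = 1" and th_bij: "bij \<theta>"
  using aut unfolding field_aut_def by auto

lemma th_inv1: "inv \<theta> (\<theta> x) = x" using th_bij by (simp add: bij_is_inj)
lemma th_inv2: "\<theta> (inv \<theta> x) = x" using th_bij by (meson bij_inv_eq_iff)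

abbreviation T where "T \<equiv> theta_pow \<theta>"

lemma T_0[simp]: "T 0 x = x" by (simp add: theta_pow_def)

lemma T_nat: "T (int i) = \<theta> ^^ i" by (simp add: theta_pow_def)

lemma T_succ: "T (m+1) x = \<theta> (T m x)"
proof (cases "0 \<le> m")
  case True
  then have "nat (m+1) = Suc (nat m)" by simp
  with True show ?thesis by (simp add: theta_pow_def)
next
  case False
  then obtain b where b: "nat (-m) = Suc b" by (metis gr0_implies_Suc leI nat_0_iff neg_0_less_iff_less zero_less_nat_eq)
  have "nat (-(m+1)) = b" using b by simp
  moreover have "T m x = inv \<theta> ((inv \<theta> ^^ b) x)" using False b by (simp add: theta_pow_def)
  ultimately show ?thesis using False b
    by (cases "m + 1 = 0") (auto simp: theta_pow_def th_inv2)
qed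

lemma T_pred: "T (m-1) x = inv \<theta> (T m x)"
proof -
  have "T m x = \<theta> (T (m-1) x)" using T_succ[of "m-1"] by simp
  then show ?thesis by (simp add: th_inv1)
qed

lemma T_add: "T (p + q) x = T p (T q x)"
proof (induction p rule: int_induct[where k=0])
  case base then show ?case by simp
next
  case (step1 i)
  have "T (i + 1 + q) x = T ((i + q) + 1) x" by (simp add: ac_simps)
  then show ?case using step1 by (simp add: T_succ)
next
  case (step2 i)
  have "i - 1 + q = (i + q) - 1" by simp
  then have "T (i - 1 + q) x = T ((i + q) - 1) x" by metis
  then show ?case using step2 by (simp add: T_pred)
qed

lemma T_comp: "T p (T q x) = T (p + q) x" by (simp add: T_add)

lemma inv_add: "inv \<theta> (x + y) = inv \<theta> x + inv \<theta> y"
  by (metis th_add th_inv1 th_inv2)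
lemma inv_mult: "inv \<theta> (x * y) = inv \<theta> x * inv \<theta> y"
  by (metis th_mult th_inv1 th_inv2)

lemma T_plus: "T p (x + y) = T p x + T p y"
proof (induction p rule: int_induct[where k=0])
  case base then show ?case by simp
next
  case (step1 i) then show ?case by (simp add: T_succ th_add)
next
  case (step2 i) then show ?case by (simp add: T_pred inv_add)
qed

lemma T_times: "T p (x * y) = T p x * T p y"
proof (induction p rule: int_induct[where k=0])
  case base then show ?case by simp
next
  case (step1 i) then show ?case by (simp add: T_succ th_mult)
next
  case (step2 i) then show ?case by (simp add: T_pred inv_mult)
qed

lemma T_inj: "T p x = T p y \<longleftrightarrow> x = y"
  by (metis T_comp T_0 add.left_inverse)

lemma T_zero[simp]: "T p 0 = 0"
  by (metis T_plus add_cancel_right_right)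

lemma T_one[simp]: "T p 1 = 1"
proof (induction p rule: int_induct[where k=0])
  case base then show ?case by simp
next
  case (step1 i) then show ?case by (simp add: T_succ th_1)
next
  case (step2 i) then show ?case by (simp add: T_pred) (metis th_1 th_inv1)
qed

lemma T_uminus: "T p (- x) = - T p x"
  by (metis T_plus T_zero add.right_inverse add_eq_0_iff)

lemma T_minus: "T p (x - y) = T p x - T p y"
  using T_plus[of p x "- y"] T_uminus[of p y] by simp

lemma T_inverse: "T p (inverse x) = inverse (T p x)"
proof (cases "x = 0")
  case True then show ?thesis by simp
next
  case False
  then have "T p x * T p (inverse x) = 1" by (simp flip: T_times)
  from inverse_unique[OF this] show ?thesis by simp
qed

lemma T_nz: "T p x = 0 \<longleftrightarrow> x = 0" by (metis T_inj T_zero)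

lemma T_sum: "T p (sum f A) = (\<Sum>x\<in>A. T p (f x))"
  by (induction A rule: infinite_finite_induct) (auto simp: T_plus)

lemma T_if: "T p (if b then x else 0) = (if b then T p x else 0)" by simp

lemmas T_simps = T_plus T_times T_uminus T_minus T_inverse T_sum T_comp

lemma fp_zero[simp]: "(\<theta> ^^ i) 0 = 0" using T_zero[of "int i"] by (simp add: T_nat)

lemma fp_add: "(\<theta> ^^ i) (x + y) = (\<theta> ^^ i) x + (\<theta> ^^ i) y" using T_plus[of "int i"] by (simp add: T_nat)
lemma fp_mult: "(\<theta> ^^ i) (x * y) = (\<theta> ^^ i) x * (\<theta> ^^ i) y" using T_times[of "int i"] by (simp add: T_nat)
lemma fp_uminus: "(\<theta> ^^ i) (- x) = - (\<theta> ^^ i) x" using T_uminus[of "int i"] by (simp add: T_nat)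
lemma fp_one[simp]: "(\<theta> ^^ i) 1 = 1" using T_one[of "int i"] by (simp add: T_nat)
lemma fp_nz: "(\<theta> ^^ i) x = 0 \<longleftrightarrow> x = 0" using T_nz[of "int i"] by (simp add: T_nat)

abbreviation sk where "sk \<equiv> skew_mult \<theta>"

lemma inner_delta: fixes D i s :: nat shows
  "(\<Sum>j\<le>D. if i + j = s then F j else 0) = (if i \<le> s \<and> s - i \<le> D then F (s - i) else 0)"
proof -
  have "(\<Sum>j\<le>D. if i + j = s then F j else 0) = (\<Sum>j\<le>D. if j = s - i then (if i \<le> s then F j else 0) else 0)"
    by (rule sum.cong) auto
  also have "\<dots> = (if s - i \<in> {..D} then (if i \<le> s then F (s - i) else 0) else 0)"
    by (simp add: sum.delta)
  finally show ?thesis by auto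
qed

lemma coeff_sk_box:
  assumes "degree f \<le> D1" "degree g \<le> D2"
  shows "coeff (sk f g) s = (\<Sum>i\<le>D1. \<Sum>j\<le>D2. if i + j = s then coeff f i * (\<theta> ^^ i) (coeff g j) else 0)"
proof -
  have "coeff (sk f g) s = (\<Sum>i\<le>degree f. \<Sum>j\<le>degree g. if i + j = s then coeff f i * (\<theta> ^^ i) (coeff g j) else 0)"
    unfolding skew_mult_def by (simp add: coeff_sum coeff_monom)
  also have "\<dots> = (\<Sum>i\<le>degree f. \<Sum>j\<le>D2. if i + j = s then coeff f i * (\<theta> ^^ i) (coeff g j) else 0)"
    by (rule sum.cong[OF refl], rule sum.mono_neutral_left) (use assms in \<open>auto simp: coeff_eq_0\<close>)
  also have "\<dots> = (\<Sum>i\<le>D1. \<Sum>j\<le>D2. if i + j = s then coeff f i * (\<theta> ^^ i) (coeff g j) else 0)"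
    by (rule sum.mono_neutral_left) (use assms in \<open>auto intro!: sum.neutral simp: coeff_eq_0\<close>)
  finally show ?thesis .
qed

lemma coeff_sk: "coeff (sk f g) s = (\<Sum>i\<le>s. coeff f i * (\<theta> ^^ i) (coeff g (s - i)))"
proof -
  have "coeff (sk f g) s = (\<Sum>i\<le>degree f + s. \<Sum>j\<le>degree g + s. if i + j = s then coeff f i * (\<theta> ^^ i) (coeff g j) else 0)"
    by (rule coeff_sk_box) auto
  also have "\<dots> = (\<Sum>i\<le>degree f + s. if i \<le> s then coeff f i * (\<theta> ^^ i) (coeff g (s - i)) else 0)"
    by (rule sum.cong[OF refl]) (auto simp: inner_delta)
  also have "\<dots> = (\<Sum>i\<le>s. if i \<le> s then coeff f i * (\<theta> ^^ i) (coeff g (s - i)) else 0)"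
    by (rule sum.mono_neutral_right) auto
  finally show ?thesis by simp
qed

lemma sk_add_left: "sk (f1 + f2) g = sk f1 g + sk f2 g"
  by (rule poly_eqI) (simp add: coeff_sk distrib_right sum.distrib)
lemma sk_add_right: "sk f (g1 + g2) = sk f g1 + sk f g2"
  by (rule poly_eqI) (simp add: coeff_sk fp_add distrib_left sum.distrib)
lemma sk_zero_left[simp]: "sk 0 g = 0"
  by (rule poly_eqI) (simp add: coeff_sk)
lemma sk_zero_right[simp]: "sk f 0 = 0"
  by (rule poly_eqI) (simp add: coeff_sk)
lemma sk_uminus_left: "sk (- f) g = - sk f g"
  by (rule poly_eqI) (simp add: coeff_sk sum_negf)
lemma sk_uminus_right: "sk f (- g) = - sk f g"
  by (rule poly_eqI) (simp add: coeff_sk sum_negf fp_uminus)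
lemma sk_diff_left: "sk (f1 - f2) g = sk f1 g - sk f2 g"
  by (metis diff_conv_add_uminus sk_add_left sk_uminus_left)
lemma sk_diff_right: "sk f (g1 - g2) = sk f g1 - sk f g2"
  by (metis diff_conv_add_uminus sk_add_right sk_uminus_right)
lemma sk_sum_left: "sk (sum F A) g = (\<Sum>x\<in>A. sk (F x) g)"
  by (induction A rule: infinite_finite_induct) (auto simp: sk_add_left)
lemma sk_sum_right: "sk f (sum F A) = (\<Sum>x\<in>A. sk f (F x))"
  by (induction A rule: infinite_finite_induct) (auto simp: sk_add_right)

lemma sk_monom: "sk (monom a i) (monom b j) = monom (a * (\<theta> ^^ i) b) (i + j)"
proof (rule poly_eqI)
  fix s
  have "coeff (sk (monom a i) (monom b j)) s = (\<Sum>l\<le>s. if l = i then a * (\<theta> ^^ l) (coeff (monom b j) (s - l)) else 0)"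
    unfolding coeff_sk by (rule sum.cong) (auto simp: coeff_monom)
  also have "\<dots> = (if i \<le> s then a * (\<theta> ^^ i) (coeff (monom b j) (s - i)) else 0)"
    by (simp add: sum.delta)
  also have "\<dots> = coeff (monom (a * (\<theta> ^^ i) b) (i + j)) s"
    by (auto simp: coeff_monom)
  finally show "coeff (sk (monom a i) (monom b j)) s = coeff (monom (a * (\<theta> ^^ i) b) (i + j)) s" .
qed

lemma sk_monom_assoc: "sk (sk (monom a i) (monom b j)) (monom d l) = sk (monom a i) (sk (monom b j) (monom d l))"
  by (simp add: sk_monom fp_mult mult.assoc funpow_add add.assoc)

lemma sk_assoc2: "sk (sk (monom a i) (monom b j)) h = sk (monom a i) (sk (monom b j) h)"
proof -
  have "sk (sk (monom a i) (monom b j)) (\<Sum>l\<le>degree h. monom (coeff h l) l) = sk (monom a i) (sk (monom b j) (\<Sum>l\<le>degree h. monom (coeff h l) l))"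
    by (simp only: sk_sum_right sk_monom_assoc)
  then show ?thesis by (simp only: poly_as_sum_of_monoms)
qed

lemma sk_assoc3: "sk (sk (monom a i) g) h = sk (monom a i) (sk g h)"
proof -
  have "sk (sk (monom a i) (\<Sum>l\<le>degree g. monom (coeff g l) l)) h = sk (monom a i) (sk (\<Sum>l\<le>degree g. monom (coeff g l) l) h)"
    by (simp only: sk_sum_right sk_sum_left sk_assoc2)
  then show ?thesis by (simp only: poly_as_sum_of_monoms)
qed

lemma sk_assoc: "sk (sk f g) h = sk f (sk g h)"
proof -
  have "sk (sk (\<Sum>l\<le>degree f. monom (coeff f l) l) g) h = sk (\<Sum>l\<le>degree f. monom (coeff f l) l) (sk g h)"
    by (simp only: sk_sum_left sk_assoc3)
  then show ?thesis by (simp only: poly_as_sum_of_monoms)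
qed

lemma sk_const_left: "sk [:c:] f = smult c f"
proof (rule poly_eqI)
  fix s
  have "coeff (sk [:c:] f) s = (\<Sum>i\<le>s. if i = 0 then c * coeff f s else 0)"
    unfolding coeff_sk by (rule sum.cong) (auto simp: coeff_pCons')
  then show "coeff (sk [:c:] f) s = coeff (smult c f) s" by simp
qed

lemma coeff_sk_const_right: "coeff (sk f [:c:]) s = coeff f s * (\<theta> ^^ s) c"
proof -
  have "coeff (sk f [:c:]) s = (\<Sum>i\<le>s. if i = s then coeff f i * (\<theta> ^^ i) c else 0)"
    unfolding coeff_sk by (rule sum.cong) (auto simp: coeff_pCons')
  then show ?thesis by simp
qed

lemma coeff_sk_xn_left: "coeff (sk (monom 1 n) f) m = (if n \<le> m then (\<theta> ^^ n) (coeff f (m - n)) else 0)"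
proof -
  have "coeff (sk (monom 1 n) f) m = (\<Sum>i\<le>m. if i = n then (\<theta> ^^ i) (coeff f (m - i)) else 0)"
    unfolding coeff_sk by (rule sum.cong) (auto simp: coeff_monom)
  then show ?thesis by simp
qed

lemma coeff_sk_xn_right: "coeff (sk f (monom 1 n)) m = (if n \<le> m then coeff f (m - n) else 0)"
proof -
  have "coeff (sk f (monom 1 n)) m = (\<Sum>i\<le>m. if i = m - n \<and> n \<le> m then coeff f i else 0)"
    unfolding coeff_sk by (rule sum.cong) (auto simp: coeff_monom)
  also have "\<dots> = (\<Sum>i\<le>m. if i = m - n then (if n \<le> m then coeff f i else 0) else 0)"
    by (rule sum.cong) auto
  finally show ?thesis by (simp add: sum.delta)
qed

lemma prod_zero_helper: "degree f < i \<or> degree g < j \<Longrightarrow> coeff f i * (\<theta> ^^ i) (coeff g j) = 0"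
  by (auto simp: coeff_eq_0)

lemma coeff_sk_high:
  assumes "degree f + degree g < m" shows "coeff (sk f g) m = 0"
  unfolding coeff_sk
proof (rule sum.neutral, rule ballI)
  fix i assume "i \<in> {..m}"
  then have "degree f < i \<or> degree g < m - i" using assms by auto
  then show "coeff f i * (\<theta> ^^ i) (coeff g (m - i)) = 0" by (rule prod_zero_helper)
qed

lemma coeff_sk_top: "coeff (sk f g) (degree f + degree g) = lead_coeff f * (\<theta> ^^ degree f) (lead_coeff g)"
proof -
  have "coeff (sk f g) (degree f + degree g) = (\<Sum>i\<le>degree f + degree g. if i = degree f then coeff f i * (\<theta> ^^ i) (coeff g (degree f + degree g - i)) else 0)"
    unfolding coeff_sk
  proof (rule sum.cong[OF refl])
    fix i assume "i \<in> {..degree f + degree g}"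
    show "coeff f i * (\<theta> ^^ i) (coeff g (degree f + degree g - i)) = (if i = degree f then coeff f i * (\<theta> ^^ i) (coeff g (degree f + degree g - i)) else 0)"
    proof (cases "i = degree f")
      case False
      then have "degree f < i \<or> degree g < degree f + degree g - i" by auto
      then show ?thesis using prod_zero_helper False by simp
    qed simp
  qed
  then show ?thesis by simp
qed

lemma degree_sk: assumes "f \<noteq> 0" "g \<noteq> 0" shows "degree (sk f g) = degree f + degree g"
proof -
  have "coeff (sk f g) (degree f + degree g) \<noteq> 0" using assms by (simp add: coeff_sk_top fp_nz)
  then have "degree f + degree g \<le> degree (sk f g)" by (rule le_degree)
  moreover have "degree (sk f g) \<le> degree f + degree g"
    by (rule degree_le) (auto intro: coeff_sk_high)
  ultimately show ?thesis by simp
qed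

lemma sk_nz: assumes "f \<noteq> 0" "g \<noteq> 0" shows "sk f g \<noteq> 0"
proof
  assume "sk f g = 0"
  then have "coeff (sk f g) (degree f + degree g) = 0" by simp
  then show False using assms by (simp add: coeff_sk_top fp_nz)
qed

lemma sk_cancel: assumes "g \<noteq> 0" "sk p g = sk q g" shows "p = q"
proof -
  have "sk (p - q) g = 0" using assms by (simp add: sk_diff_left)
  then have "p - q = 0" using sk_nz assms(1) by blast
  then show ?thesis by simp
qed

end


context
  fixes \<theta> :: "'a::field \<Rightarrow> 'a"
  assumes aut: "field_aut \<theta>"
begin

lemma fp_to_T: "(\<theta> ^^ i) x = theta_pow \<theta> (int i) x"
  using T_nat[OF aut] by simp

lemma sk_smult_left: "skew_mult \<theta> (smult c p) q = smult c (skew_mult \<theta> p q)"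
  using sk_assoc[OF aut, of "[:c:]" p q] by (simp add: sk_const_left[OF aut])

lemma coeff_rho_l: "coeff (rho_l \<theta> f) i = (if i \<le> degree f then (\<theta> ^^ i) (coeff f (degree f - i)) else 0)"
  unfolding rho_l_def by (simp add: coeff_sum coeff_monom sum.delta)

lemma coeff_rho_r: "coeff (rho_r \<theta> f) i = (if i \<le> degree f then theta_pow \<theta> (int i - int (degree f)) (coeff f (degree f - i)) else 0)"
  unfolding rho_r_def by (simp add: coeff_sum coeff_monom sum.delta)

lemma degree_rho_l: "degree (rho_l \<theta> f) \<le> degree f"
  by (rule degree_le) (simp add: coeff_rho_l)

lemma degree_rho_r: "degree (rho_r \<theta> f) \<le> degree f"
  by (rule degree_le) (simp add: coeff_rho_r)

lemma coeff_map_T: "coeff (map_poly (theta_pow \<theta> p) f) i = theta_pow \<theta> p (coeff f i)"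
  by (rule coeff_map_poly) (simp add: T_zero[OF aut])

lemma degree_map_T: "degree (map_poly (theta_pow \<theta> p) f) = degree f"
  by (rule degree_map_poly) (simp add: T_nz[OF aut])

lemma sum_rev: "(\<Sum>i\<le>(m::nat). F i) = (\<Sum>i\<le>m. F (m - i))"
  by (rule sum.reindex_bij_witness[where i="\<lambda>i. m - i" and j="\<lambda>i. m - i"]) auto

end

lemma ptc_alg:
  fixes \<theta> :: "'a::field \<Rightarrow> 'a"
  assumes aut: "field_aut \<theta>" and nz: "c \<noteq> 0" "a \<noteq> 0"
    and Lg: "T \<theta> N gi * T \<theta> I a = c * gi" and NMK: "N = M + K"
  shows "T \<theta> ((M - I) - M) (T \<theta> N gi) * T \<theta> (M - I) (T \<theta> (K - N) (inverse c))
         * T \<theta> (M - I) (T \<theta> (K - J) (T \<theta> (- N) hj))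
       = inverse a * T \<theta> ((M - I) + (K - J) - N) (hj * T \<theta> J gi)"
proof -
  have Ta: "T \<theta> I a \<noteq> 0" using nz by (simp add: T_nz[OF aut])
  have Tc: "T \<theta> (- I) c \<noteq> 0" using nz by (simp add: T_nz[OF aut])
  have g: "T \<theta> N gi = c * gi * inverse (T \<theta> I a)" using Lg Ta by (simp add: field_simps)
  have 1: "T \<theta> ((M - I) - M) (T \<theta> N gi) = T \<theta> (- I) c * T \<theta> (- I) gi * inverse a"
    by (simp add: g T_times[OF aut] T_inverse[OF aut] T_comp[OF aut] T_0[OF aut])
  have 2: "T \<theta> (M - I) (T \<theta> (K - N) (inverse c)) = inverse (T \<theta> (- I) c)"
    by (simp add: T_comp[OF aut] T_inverse[OF aut] NMK)
  have 3: "T \<theta> (M - I) (T \<theta> (K - J) (T \<theta> (- N) hj)) = T \<theta> ((M - I) + (K - J) - N) hj"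
    by (simp add: T_comp[OF aut] algebra_simps)
  have 4: "T \<theta> ((M - I) + (K - J) - N) (T \<theta> J gi) = T \<theta> (- I) gi"
    by (simp add: T_comp[OF aut] NMK)
  show ?thesis unfolding 1 2 3 T_times[OF aut, of _ hj] 4 using Tc by (simp add: field_simps)
qed

lemma ptb_alg:
  fixes \<theta> :: "'a::field \<Rightarrow> 'a"
  assumes aut: "field_aut \<theta>" and nz: "c \<noteq> 0" "a \<noteq> 0"
    and Lg: "T \<theta> N gi * T \<theta> I a = c * gi" and NMK: "N = M + K"
  shows "b * T \<theta> (K - J) (T \<theta> (- N) hj) * T \<theta> (K - J) a * T \<theta> (K - J) (T \<theta> ((M - I) - M) (T \<theta> N gi))
       = b * T \<theta> ((K - J) + (M - I) - M) c * T \<theta> ((K - J) + (M - I) - M - N) (c * (gi * T \<theta> I (inverse a) * T \<theta> I hj))"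
proof -
  have Ta: "T \<theta> I a \<noteq> 0" using nz by (simp add: T_nz[OF aut])
  have Ta2: "T \<theta> (K - J) a \<noteq> 0" using nz by (simp add: T_nz[OF aut])
  have g: "T \<theta> N gi = c * gi * inverse (T \<theta> I a)" using Lg Ta by (simp add: field_simps)
  have in1: "c * (gi * T \<theta> I (inverse a) * T \<theta> I hj) = T \<theta> N gi * T \<theta> I hj"
    by (simp add: g T_inverse[OF aut] mult.assoc)
  have 1: "T \<theta> (K - J) (T \<theta> ((M - I) - M) (T \<theta> N gi)) = T \<theta> (K - J - I) c * T \<theta> (K - J - I) gi * inverse (T \<theta> (K - J) a)"
    by (simp add: g T_times[OF aut] T_inverse[OF aut] T_comp[OF aut])
  have 2: "T \<theta> (K - J) (T \<theta> (- N) hj) = T \<theta> (K - J - N) hj"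
    by (simp add: T_comp[OF aut])
  have 3: "T \<theta> (K - J - I - N) (T \<theta> N gi * T \<theta> I hj) = T \<theta> (K - J - I) gi * T \<theta> (K - J - N) hj"
    by (simp add: T_times[OF aut] T_comp[OF aut] algebra_simps)
  have 4: "(K - J) + (M - I) - M = K - J - I" by simp
  show ?thesis unfolding in1 1 2 4 3 using Ta2 by (simp add: field_simps)
qed

context
  fixes \<theta> :: "'a::field \<Rightarrow> 'a" and a :: 'a and g h :: "'a poly" and n :: nat
  assumes aut: "field_aut \<theta>"
    and a0: "a \<noteq> 0"
    and n0: "0 < n"
    and fact: "monom 1 n - [:a:] = skew_mult \<theta> h g"
begin


lemma coeff_const: "coeff [:b:] i = (if i = 0 then b else 0)"
  by (cases i) auto

lemma coeff_E: "coeff (monom 1 n - [:b::'a:]) i = (if i = n then 1 else 0) - (if i = 0 then b else 0)"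
  using n0 by (auto simp: coeff_monom coeff_const)

lemma E_nz: "monom 1 n - [:b::'a:] \<noteq> 0"
proof
  assume "monom 1 n - [:b:] = 0"
  then have "coeff (monom 1 n - [:b:]) n = 0" by simp
  then show False using n0 by (simp add: coeff_E coeff_const coeff_monom)
qed

lemma degree_E: "degree (monom 1 n - [:b::'a:]) = n"
proof -
  have "degree (monom 1 n - [:b:]) \<le> n" by (rule degree_le) (auto simp: coeff_E coeff_const coeff_monom)
  moreover have "n \<le> degree (monom 1 n - [:b:])" by (rule le_degree) (use n0 in \<open>simp add: coeff_E coeff_const coeff_monom\<close>)
  ultimately show ?thesis by simp
qed

lemma h_nz: "h \<noteq> 0" and g_nz: "g \<noteq> 0"
  using E_nz[of a] fact by (auto simp: sk_zero_left[OF aut] sk_zero_right[OF aut])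

lemma deg_sum: "degree h + degree g = n"
  using degree_sk[OF aut h_nz g_nz] fact degree_E[of a] by simp

lemma g0_nz: "coeff g 0 \<noteq> 0"
proof -
  have "coeff (sk \<theta> h g) 0 = coeff h 0 * coeff g 0" by (simp add: coeff_sk[OF aut])
  moreover have "coeff (sk \<theta> h g) 0 = - a" using fact[symmetric] n0 by (simp add: coeff_E coeff_const coeff_monom)
  ultimately show ?thesis using a0 by auto
qed

definition "Gn = map_poly (\<theta> ^^ n) g"

lemma coeff_Gn: "coeff Gn i = (\<theta> ^^ n) (coeff g i)"
  unfolding Gn_def by (rule coeff_map_poly) (simp add: fp_zero[OF aut])

lemma xg: "sk \<theta> (monom 1 n) g = sk \<theta> Gn (monom 1 n)"
  by (rule poly_eqI) (simp add: coeff_sk_xn_left[OF aut] coeff_sk_xn_right[OF aut] coeff_Gn)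

lemma D_eq: "sk \<theta> (sk \<theta> h g - sk \<theta> Gn h) g = sk \<theta> Gn [:a:] - smult a g"
proof -
  have "sk \<theta> (sk \<theta> h g) g = sk \<theta> Gn (monom 1 n) - smult a g"
    by (simp add: fact[symmetric] sk_diff_left[OF aut] sk_const_left[OF aut] xg)
  moreover have "sk \<theta> (sk \<theta> Gn h) g = sk \<theta> Gn (monom 1 n) - sk \<theta> Gn [:a:]"
    by (simp add: sk_assoc[OF aut] fact[symmetric] sk_diff_right[OF aut])
  ultimately show ?thesis by (simp add: sk_diff_left[OF aut])
qed

definition "w = sk \<theta> h g - sk \<theta> Gn h"

lemma coeff_D: "coeff (sk \<theta> Gn [:a:] - smult a g) i = (\<theta> ^^ n) (coeff g i) * (\<theta> ^^ i) a - a * coeff g i"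
  by (simp add: coeff_sk_const_right[OF aut] coeff_Gn)

lemma deg_w: "degree w = 0"
proof (rule ccontr)
  assume "degree w \<noteq> 0"
  then have wnz: "w \<noteq> 0" by auto
  have "degree (sk \<theta> w g) = degree w + degree g" by (rule degree_sk[OF aut wnz g_nz])
  moreover have "degree (sk \<theta> w g) \<le> degree g"
    unfolding w_def D_eq by (rule degree_le) (auto simp: coeff_sk_const_right[OF aut] coeff_Gn coeff_eq_0 fp_zero[OF aut])
  ultimately show False using \<open>degree w \<noteq> 0\<close> by simp
qed

definition "c0 = gamma \<theta> n a g"

lemma L: "(\<theta> ^^ n) (coeff g i) * (\<theta> ^^ i) a = c0 * coeff g i"
proof -
  obtain w0 where w0: "w = [:w0:]" using deg_w by (metis degree_0_id)
  have key: "(\<theta> ^^ n) (coeff g j) * (\<theta> ^^ j) a - a * coeff g j = w0 * coeff g j" for j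
  proof -
    have "sk \<theta> w g = smult w0 g" using w0 by (simp add: sk_const_left[OF aut])
    then have "coeff (sk \<theta> w g) j = w0 * coeff g j" by simp
    then show ?thesis unfolding w_def D_eq coeff_D .
  qed
  have "(\<theta> ^^ n) (coeff g 0) * a = (a + w0) * coeff g 0" using key[of 0] by (simp add: algebra_simps)
  then have "a + w0 = c0" unfolding c0_def gamma_def using g0_nz by (simp add: field_simps)
  have k': "(\<theta> ^^ n) (coeff g i) * (\<theta> ^^ i) a = w0 * coeff g i + a * coeff g i"
    using key[of i] by (simp add: diff_eq_eq)
  then show ?thesis by (simp add: \<open>a + w0 = c0\<close>[symmetric] algebra_simps)
qed

lemma fp_inverse: "(\<theta> ^^ j) (inverse x) = inverse ((\<theta> ^^ j) x)"
  using T_inverse[OF aut, of "int j"] by (simp add: T_nat[OF aut])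

lemma c0_nz: "c0 \<noteq> 0"
  unfolding c0_def gamma_def using a0 g0_nz by (simp add: fp_nz[OF aut])

lemma L2: "inverse c0 * (\<theta> ^^ n) (coeff g j) = coeff g j * (\<theta> ^^ j) (inverse a)"
proof -
  have nz: "(\<theta> ^^ j) a \<noteq> 0" using a0 by (simp add: fp_nz[OF aut])
  have "(\<theta> ^^ n) (coeff g j) = c0 * coeff g j / (\<theta> ^^ j) a" using L[of j] nz by (simp add: field_simps)
  then show ?thesis using c0_nz nz by (simp add: fp_inverse) (simp add: field_simps)
qed

lemma partA: "sk \<theta> (sk \<theta> g [:inverse a:]) h = sk \<theta> [:inverse c0:] (monom 1 n - [:c0:])"
proof (rule sk_cancel[OF aut g_nz])
  let ?X = "sk \<theta> g [:inverse a:]"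
  have l: "sk \<theta> (sk \<theta> ?X h) g = sk \<theta> ?X (monom 1 n) - sk \<theta> ?X [:a:]"
    by (simp add: sk_assoc[OF aut] fact[symmetric] sk_diff_right[OF aut])
  have r: "sk \<theta> (sk \<theta> [:inverse c0:] (monom 1 n - [:c0:])) g = smult (inverse c0) (sk \<theta> (monom 1 n) g - smult c0 g)"
    by (simp add: sk_const_left[OF aut] sk_smult_left[OF aut] sk_diff_left[OF aut])
  show "sk \<theta> (sk \<theta> ?X h) g = sk \<theta> (sk \<theta> [:inverse c0:] (monom 1 n - [:c0:])) g"
    unfolding l r
  proof (rule poly_eqI)
    fix m
    show "coeff (sk \<theta> ?X (monom 1 n) - sk \<theta> ?X [:a:]) m = coeff (smult (inverse c0) (sk \<theta> (monom 1 n) g - smult c0 g)) m"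
      using c0_nz a0
      by (auto simp: coeff_sk_xn_right[OF aut] coeff_sk_xn_left[OF aut] coeff_sk_const_right[OF aut] L2
          right_diff_distrib fp_inverse fp_nz[OF aut])
  qed
qed

definition "Hl = rho_l \<theta> (map_poly (theta_pow \<theta> (- int n)) h)"
definition "Gr = rho_r \<theta> (map_poly (theta_pow \<theta> (int n)) g)"
definition "ec = T \<theta> (int (degree h) - int n) (inverse c0)"

lemma coeff_Hl: "coeff Hl j = (if j \<le> degree h then (\<theta> ^^ j) (T \<theta> (- int n) (coeff h (degree h - j))) else 0)"
  by (simp add: Hl_def coeff_rho_l[OF aut] degree_map_T[OF aut] coeff_map_T[OF aut])

lemma coeff_Gr: "coeff Gr i = (if i \<le> degree g then T \<theta> (int i - int (degree g)) (T \<theta> (int n) (coeff g (degree g - i))) else 0)"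
  by (simp add: Gr_def coeff_rho_r[OF aut] degree_map_T[OF aut] coeff_map_T[OF aut])

lemma deg_Hl: "degree Hl \<le> degree h"
  using degree_rho_l[OF aut] degree_map_T[OF aut] unfolding Hl_def by metis

lemma deg_Gr: "degree Gr \<le> degree g"
  using degree_rho_r[OF aut] degree_map_T[OF aut] unfolding Gr_def by metis

lemma ptc:
  assumes "i \<le> degree g" "j \<le> degree h" "(degree g - i) + (degree h - j) = s"
  shows "coeff (sk \<theta> Gr [:ec:]) (degree g - i) * (\<theta> ^^ (degree g - i)) (coeff Hl (degree h - j))
    = inverse a * T \<theta> (int s - int n) (coeff h j * (\<theta> ^^ j) (coeff g i))"
proof -
  have N: "int n = int (degree g) + int (degree h)" using deg_sum by simp
  have X: "int (degree g - i) = int (degree g) - int i" using assms by simp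
  have Y: "int (degree h - j) = int (degree h) - int j" using assms by simp
  have S: "int s = int (degree g) - int i + (int (degree h) - int j)" using assms by simp
  have Lg: "T \<theta> (int n) (coeff g i) * T \<theta> (int i) a = c0 * coeff g i" using L[of i] by (simp add: fp_to_T[OF aut])
  have "coeff (sk \<theta> Gr [:ec:]) (degree g - i) * (\<theta> ^^ (degree g - i)) (coeff Hl (degree h - j))
    = T \<theta> ((int (degree g) - int i) - int (degree g)) (T \<theta> (int n) (coeff g i))
      * T \<theta> (int (degree g) - int i) (T \<theta> (int (degree h) - int n) (inverse c0))
      * T \<theta> (int (degree g) - int i) (T \<theta> (int (degree h) - int j) (T \<theta> (- int n) (coeff h j)))"
    using assms by (simp add: coeff_sk_const_right[OF aut] coeff_Gr coeff_Hl fp_to_T[OF aut] X Y ec_def)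
  also have "\<dots> = inverse a * T \<theta> ((int (degree g) - int i) + (int (degree h) - int j) - int n) (coeff h j * T \<theta> (int j) (coeff g i))"
    by (rule ptc_alg[OF aut c0_nz a0 Lg N])
  also have "\<dots> = inverse a * T \<theta> (int s - int n) (coeff h j * (\<theta> ^^ j) (coeff g i))"
    using S by (simp add: fp_to_T[OF aut])
  finally show ?thesis .
qed

lemma sum_rev2: "(\<Sum>i\<le>(m::nat). \<Sum>j\<le>(k::nat). F i j) = (\<Sum>i\<le>m. \<Sum>j\<le>k. F (m - i) (k - j))"
proof -
  have "(\<Sum>i\<le>m. \<Sum>j\<le>k. F i j) = (\<Sum>i\<le>m. \<Sum>j\<le>k. F (m - i) j)"
    using sum_rev[OF aut, of "\<lambda>i. \<Sum>j\<le>k. F i j" m] by simp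
  also have "\<dots> = (\<Sum>i\<le>m. \<Sum>j\<le>k. F (m - i) (k - j))"
    by (rule sum.cong[OF refl]) (use sum_rev[OF aut, of "\<lambda>j. F _ j" k] in simp)
  finally show ?thesis .
qed

lemma coeff_hg_swap: "coeff (sk \<theta> h g) N = (\<Sum>i\<le>degree g. \<Sum>j\<le>degree h. if i + j = N then coeff h j * (\<theta> ^^ j) (coeff g i) else 0)"
proof -
  have "coeff (sk \<theta> h g) N = (\<Sum>j\<le>degree h. \<Sum>i\<le>degree g. if j + i = N then coeff h j * (\<theta> ^^ j) (coeff g i) else 0)"
    by (rule coeff_sk_box[OF aut]) auto
  also have "\<dots> = (\<Sum>i\<le>degree g. \<Sum>j\<le>degree h. if j + i = N then coeff h j * (\<theta> ^^ j) (coeff g i) else 0)"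
    by (rule sum.swap)
  finally show ?thesis by (simp add: add.commute)
qed

lemma C: "coeff (sk \<theta> (sk \<theta> Gr [:ec:]) Hl) s
   = (if s \<le> n then inverse a * T \<theta> (int s - int n) (coeff (sk \<theta> h g) (n - s)) else 0)"
proof -
  let ?m = "degree g" and ?k = "degree h"
  let ?F = "\<lambda>i j. if i + j = s then coeff (sk \<theta> Gr [:ec:]) i * (\<theta> ^^ i) (coeff Hl j) else 0"
  have dX: "degree (sk \<theta> Gr [:ec:]) \<le> ?m"
    by (rule degree_le) (auto simp: coeff_sk_const_right[OF aut] coeff_Gr)
  have "coeff (sk \<theta> (sk \<theta> Gr [:ec:]) Hl) s = (\<Sum>i\<le>?m. \<Sum>j\<le>?k. ?F i j)"
    by (rule coeff_sk_box[OF aut dX deg_Hl])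
  also have "\<dots> = (\<Sum>i\<le>?m. \<Sum>j\<le>?k. ?F (?m - i) (?k - j))"
    by (rule sum_rev2)
  also have "\<dots> = (\<Sum>i\<le>?m. \<Sum>j\<le>?k. if i + j = n - s \<and> s \<le> n then inverse a * T \<theta> (int s - int n) (coeff h j * (\<theta> ^^ j) (coeff g i)) else 0)"
  proof (rule sum.cong[OF refl], rule sum.cong[OF refl])
    fix i j assume i: "i \<in> {..?m}" and j: "j \<in> {..?k}"
    show "?F (?m - i) (?k - j) = (if i + j = n - s \<and> s \<le> n then inverse a * T \<theta> (int s - int n) (coeff h j * (\<theta> ^^ j) (coeff g i)) else 0)"
    proof (cases "(?m - i) + (?k - j) = s")
      case True
      then have "i + j = n - s \<and> s \<le> n" using i j deg_sum by auto
      then show ?thesis using True ptc[of i j s] i j by simp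
    next
      case False
      then have c: "(i + j = n - s \<and> s \<le> n) = False" using i j deg_sum by auto
      show ?thesis unfolding c using False by simp
    qed
  qed
  also have "\<dots> = (if s \<le> n then inverse a * T \<theta> (int s - int n) (coeff (sk \<theta> h g) (n - s)) else 0)"
    by (auto simp: coeff_hg_swap T_sum[OF aut] sum_distrib_left T_zero[OF aut] intro!: sum.cong)
  finally show ?thesis .
qed

lemma partC: "sk \<theta> (sk \<theta> (- Gr) [:ec:]) Hl = monom 1 n - [:inverse a:]"
proof (rule poly_eqI)
  fix s
  have "coeff (sk \<theta> (sk \<theta> (- Gr) [:ec:]) Hl) s = - coeff (sk \<theta> (sk \<theta> Gr [:ec:]) Hl) s"
    by (simp add: sk_uminus_left[OF aut])
  also have "\<dots> = coeff (monom 1 n - [:inverse a:]) s"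
    unfolding C fact[symmetric] using n0 a0
    by (auto simp: coeff_E coeff_const coeff_monom T_0[OF aut] T_one[OF aut] T_uminus[OF aut] T_zero[OF aut])
  finally show "coeff (sk \<theta> (sk \<theta> (- Gr) [:ec:]) Hl) s = coeff (monom 1 n - [:inverse a:]) s" .
qed

definition "bb = - T \<theta> (int (degree h) - int n) (inverse c0) * T \<theta> (int (degree h)) (inverse c0)"

lemma coeff_Y: "coeff (sk \<theta> (sk \<theta> [:bb:] Hl) [:a:]) j = bb * coeff Hl j * (\<theta> ^^ j) a"
  by (simp add: coeff_sk_const_right[OF aut] sk_const_left[OF aut])

lemma ptb:
  assumes "i \<le> degree g" "j \<le> degree h" "(degree h - j) + (degree g - i) = s"
  shows "coeff (sk \<theta> (sk \<theta> [:bb:] Hl) [:a:]) (degree h - j) * (\<theta> ^^ (degree h - j)) (coeff Gr (degree g - i))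
    = bb * T \<theta> (int s - int (degree g)) c0 * T \<theta> (int s - int (degree g) - int n) (c0 * (coeff g i * (\<theta> ^^ i) (inverse a) * (\<theta> ^^ i) (coeff h j)))"
proof -
  have N: "int n = int (degree g) + int (degree h)" using deg_sum by simp
  have X: "int (degree g - i) = int (degree g) - int i" using assms by simp
  have Y: "int (degree h - j) = int (degree h) - int j" using assms by simp
  have S: "int s = int (degree h) - int j + (int (degree g) - int i)" using assms by simp
  have Lg: "T \<theta> (int n) (coeff g i) * T \<theta> (int i) a = c0 * coeff g i" using L[of i] by (simp add: fp_to_T[OF aut])
  have "coeff (sk \<theta> (sk \<theta> [:bb:] Hl) [:a:]) (degree h - j) * (\<theta> ^^ (degree h - j)) (coeff Gr (degree g - i))
    = bb * T \<theta> (int (degree h) - int j) (T \<theta> (- int n) (coeff h j)) * T \<theta> (int (degree h) - int j) a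
      * T \<theta> (int (degree h) - int j) (T \<theta> ((int (degree g) - int i) - int (degree g)) (T \<theta> (int n) (coeff g i)))"
    using assms by (simp add: coeff_Y coeff_Gr coeff_Hl fp_to_T[OF aut] X Y)
  also have "\<dots> = bb * T \<theta> ((int (degree h) - int j) + (int (degree g) - int i) - int (degree g)) c0
     * T \<theta> ((int (degree h) - int j) + (int (degree g) - int i) - int (degree g) - int n) (c0 * (coeff g i * T \<theta> (int i) (inverse a) * T \<theta> (int i) (coeff h j)))"
    by (rule ptb_alg[OF aut c0_nz a0 Lg N])
  also have "\<dots> = bb * T \<theta> (int s - int (degree g)) c0 * T \<theta> (int s - int (degree g) - int n) (c0 * (coeff g i * (\<theta> ^^ i) (inverse a) * (\<theta> ^^ i) (coeff h j)))"
    using S by (simp add: fp_to_T[OF aut])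
  finally show ?thesis .
qed

lemma coeff_A_box: "coeff (sk \<theta> (sk \<theta> g [:inverse a:]) h) N = (\<Sum>j\<le>degree h. \<Sum>i\<le>degree g. if i + j = N then coeff g i * (\<theta> ^^ i) (inverse a) * (\<theta> ^^ i) (coeff h j) else 0)"
proof -
  have dX: "degree (sk \<theta> g [:inverse a:]) \<le> degree g"
    by (rule degree_le) (auto simp: coeff_sk_const_right[OF aut] coeff_eq_0)
  have "coeff (sk \<theta> (sk \<theta> g [:inverse a:]) h) N = (\<Sum>i\<le>degree g. \<Sum>j\<le>degree h. if i + j = N then coeff (sk \<theta> g [:inverse a:]) i * (\<theta> ^^ i) (coeff h j) else 0)"
    by (rule coeff_sk_box[OF aut dX]) simp
  also have "\<dots> = (\<Sum>j\<le>degree h. \<Sum>i\<le>degree g. if i + j = N then coeff (sk \<theta> g [:inverse a:]) i * (\<theta> ^^ i) (coeff h j) else 0)"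
    by (rule sum.swap)
  also have "\<dots> = (\<Sum>j\<le>degree h. \<Sum>i\<le>degree g. if i + j = N then coeff g i * (\<theta> ^^ i) (inverse a) * (\<theta> ^^ i) (coeff h j) else 0)"
    by (intro sum.cong refl) (simp add: coeff_sk_const_right[OF aut])
  finally show ?thesis .
qed

lemma CB: "coeff (sk \<theta> (sk \<theta> (sk \<theta> [:bb:] Hl) [:a:]) Gr) s
   = (if s \<le> n then bb * T \<theta> (int s - int (degree g)) c0 * T \<theta> (int s - int (degree g) - int n) (c0 * coeff (sk \<theta> (sk \<theta> g [:inverse a:]) h) (n - s)) else 0)"
proof -
  let ?m = "degree g" and ?k = "degree h"
  let ?Y = "sk \<theta> (sk \<theta> [:bb:] Hl) [:a:]"
  let ?F = "\<lambda>j i. if j + i = s then coeff ?Y j * (\<theta> ^^ j) (coeff Gr i) else 0"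
  have dX: "degree ?Y \<le> ?k"
    by (rule degree_le) (auto simp: coeff_Y coeff_Hl)
  have "coeff (sk \<theta> ?Y Gr) s = (\<Sum>j\<le>?k. \<Sum>i\<le>?m. ?F j i)"
    by (rule coeff_sk_box[OF aut dX deg_Gr])
  also have "\<dots> = (\<Sum>j\<le>?k. \<Sum>i\<le>?m. ?F (?k - j) (?m - i))"
    by (rule sum_rev2)
  also have "\<dots> = (\<Sum>j\<le>?k. \<Sum>i\<le>?m. if i + j = n - s \<and> s \<le> n then bb * T \<theta> (int s - int (degree g)) c0 * T \<theta> (int s - int (degree g) - int n) (c0 * (coeff g i * (\<theta> ^^ i) (inverse a) * (\<theta> ^^ i) (coeff h j))) else 0)"
  proof (rule sum.cong[OF refl], rule sum.cong[OF refl])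
    fix j i assume j: "j \<in> {..?k}" and i: "i \<in> {..?m}"
    show "?F (?k - j) (?m - i) = (if i + j = n - s \<and> s \<le> n then bb * T \<theta> (int s - int (degree g)) c0 * T \<theta> (int s - int (degree g) - int n) (c0 * (coeff g i * (\<theta> ^^ i) (inverse a) * (\<theta> ^^ i) (coeff h j))) else 0)"
    proof (cases "(?k - j) + (?m - i) = s")
      case True
      then have "i + j = n - s \<and> s \<le> n" using i j deg_sum by auto
      then show ?thesis using True ptb[of i j s] i j by simp
    next
      case False
      then have c: "(i + j = n - s \<and> s \<le> n) = False" using i j deg_sum by auto
      show ?thesis unfolding c using False by simp
    qed
  qed
  also have "\<dots> = (if s \<le> n then bb * T \<theta> (int s - int (degree g)) c0 * T \<theta> (int s - int (degree g) - int n) (c0 * coeff (sk \<theta> (sk \<theta> g [:inverse a:]) h) (n - s)) else 0)"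
    by (auto simp: coeff_A_box T_sum[OF aut] sum_distrib_left T_zero[OF aut] intro!: sum.cong)
  finally show ?thesis .
qed

lemma partB: "sk \<theta> (sk \<theta> (sk \<theta> [:bb:] Hl) [:a:]) Gr = monom 1 n - [:T \<theta> (int (degree h)) (inverse c0):]"
proof (rule poly_eqI)
  fix s
  have N: "int n = int (degree g) + int (degree h)" using deg_sum by simp
  have cc: "c0 * (inverse c0 * x) = x" for x using c0_nz by simp
  have e1: "- int (degree g) = int (degree h) - int n" using N by simp
  have e2: "int n - int (degree g) = int (degree h)" using N by simp
  have e3: "int n - int (degree g) - int n = int (degree h) - int n" using N by simp
  have nz1: "T \<theta> (int (degree h) - int n) c0 \<noteq> 0" "T \<theta> (int (degree h)) c0 \<noteq> 0"
    using c0_nz by (auto simp: T_nz[OF aut])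
  show "coeff (sk \<theta> (sk \<theta> (sk \<theta> [:bb:] Hl) [:a:]) Gr) s = coeff (monom 1 n - [:T \<theta> (int (degree h)) (inverse c0):]) s"
  proof (cases "s = 0")
    case True
    then show ?thesis unfolding CB partA using n0 nz1
      by (simp add: coeff_E coeff_const coeff_monom cc bb_def e1 T_one[OF aut] T_inverse[OF aut] sk_const_left[OF aut] c0_nz)
  next
    case s0: False
    show ?thesis
    proof (cases "s = n")
      case True
      then show ?thesis unfolding CB partA using n0 nz1
        by (simp add: coeff_E coeff_const coeff_monom cc bb_def e2 e3 T_uminus[OF aut] T_inverse[OF aut] sk_const_left[OF aut] c0_nz) (simp add: field_simps)
    next
      case False
      then show ?thesis unfolding CB partA using n0 s0
        by (auto simp: coeff_E coeff_const coeff_monom cc T_zero[OF aut] sk_const_left[OF aut])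
    qed
  qed
qed

end

theorem corollary4p4:
  fixes \<theta> :: "'a::{field,finite} \<Rightarrow> 'a" and a :: 'a and g h :: "'a poly" and n :: nat
  assumes aut: "field_aut \<theta>"
    and a0: "a \<noteq> 0"
    and n0: "0 < n"
    and fact: "monom 1 n - [:a:] = skew_mult \<theta> h g"
  defines "k \<equiv> degree h"
    and "c \<equiv> gamma \<theta> n a g"
    and "hl \<equiv> rho_l \<theta> (map_poly (theta_pow \<theta> (- int n)) h)"
    and "gr \<equiv> rho_r \<theta> (map_poly (theta_pow \<theta> (int n)) g)"
  shows "skew_mult \<theta> (skew_mult \<theta> g [:inverse a:]) h
           = skew_mult \<theta> [:inverse c:] (monom 1 n - [:c:])
       \<and> skew_mult \<theta> (skew_mult \<theta> (skew_mult \<theta>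
            [:- theta_pow \<theta> (int k - int n) (inverse c) * theta_pow \<theta> (int k) (inverse c):]
            hl) [:a:]) gr
           = monom 1 n - [:theta_pow \<theta> (int k) (inverse c):]
       \<and> skew_mult \<theta> (skew_mult \<theta> (- gr) [:theta_pow \<theta> (int k - int n) (inverse c):]) hl
           = monom 1 n - [:inverse a:]"
proof (intro conjI)
  show "skew_mult \<theta> (skew_mult \<theta> g [:inverse a:]) h = skew_mult \<theta> [:inverse c:] (monom 1 n - [:c:])"
    using partA[OF aut a0 n0 fact] by (simp only: c_def c0_def[OF aut a0 n0 fact])
  show "skew_mult \<theta> (skew_mult \<theta> (skew_mult \<theta>
            [:- theta_pow \<theta> (int k - int n) (inverse c) * theta_pow \<theta> (int k) (inverse c):]
            hl) [:a:]) gr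
           = monom 1 n - [:theta_pow \<theta> (int k) (inverse c):]"
    using partB[OF aut a0 n0 fact] by (simp only: k_def c_def hl_def gr_def c0_def[OF aut a0 n0 fact] bb_def[OF aut a0 n0 fact] Hl_def[OF aut a0 n0 fact] Gr_def[OF aut a0 n0 fact])
  show "skew_mult \<theta> (skew_mult \<theta> (- gr) [:theta_pow \<theta> (int k - int n) (inverse c):]) hl
           = monom 1 n - [:inverse a:]"
    using partC[OF aut a0 n0 fact] by (simp only: k_def c_def hl_def gr_def c0_def[OF aut a0 n0 fact] ec_def[OF aut a0 n0 fact] Hl_def[OF aut a0 n0 fact] Gr_def[OF aut a0 n0 fact])
qed

end
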